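(* Let $(\mathrm{Con},\sqsubseteq,(s_i)_{i\in G})$ be a spatial constraint system with distributed spaces $(\Delta_I)_{I\subseteq G}$. For all $c,e\in\mathrm{Con}$ and $I,J\subseteq G$: (1) $c\sqsupseteq\Delta_I(e)$ if and only if $\Pi_I(c)\sqsupseteq e$; (2) $\Pi_I(c)\sqsupseteq\Pi_J(c)$ if $J\subseteq I$; (3) $\Pi_I(c)\sqsupseteq\pi_I(c)$.
   Context: A constraint system (cs) is a complete lattice $(\mathrm{Con},\sqsubseteq)$ with join $\sqcup$, meet $\sqcap$, bottom $\mathit{true}$, top $\mathit{false}$. A space function is a continuous (directed-join preserving) self-map $f$ on $\mathrm{Con}$ with $f(\mathit{true})=\mathit{true}$ and $f(c\sqcup d)=f(c)\sqcup f(d)$; $\mathcal{S}(\mathrm{Con})$ denotes the set of space functions ordered pointwise ($f\preceq g$ iff $f(c)\sqsubseteq g(c)$ for all $c$). A spatial constraint system $(\mathrm{Con},\sqsubseteq,(s_i)_{i\in G})$ is a cs with space functions $s_i$ indexed by an arbitrary set $G$. Distributed spaces: $\Delta_I=\max\{f\in\mathcal{S}(\mathrm{Con}) : f\preceq s_i\text{ for all }i\in I\}$ (this maximum exists). Agent projection: $\pi_i(c)=\bigsqcup\{e : c\sqsupseteq s_i(e)\}$; join projection: $\pi_I(c)=\bigsqcup\{\pi_i(c): i\in I\}$; group projection: $\Pi_I(c)=\bigsqcup\{e : c\sqsupseteq\Delta_I(e)\}$. *)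

theory Defs
  imports Main
begin

text \<open>Constraint system: a complete lattice 'a with order \<le> (the paper's \<sqsubseteq>),
  bottom = true, top = false.\<close>

definition directed :: "'a::complete_lattice set \<Rightarrow> bool" where
  "directed D \<longleftrightarrow> D \<noteq> {} \<and> (\<forall>a\<in>D. \<forall>b\<in>D. \<exists>c\<in>D. a \<le> c \<and> b \<le> c)"

definition space_fun :: "('a::complete_lattice \<Rightarrow> 'a) \<Rightarrow> bool" where
  "space_fun f \<longleftrightarrow>
     (\<forall>D. directed D \<longrightarrow> f (Sup D) = Sup (f ` D)) \<and>
     f bot = bot \<and>
     (\<forall>c d. f (sup c d) = sup (f c) (f d))"

definition spatial_cs :: "('g \<Rightarrow> 'a::complete_lattice \<Rightarrow> 'a) \<Rightarrow> bool" where
  "spatial_cs s \<longleftrightarrow> (\<forall>i. space_fun (s i))"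

definition dist_space :: "('g \<Rightarrow> 'a::complete_lattice \<Rightarrow> 'a) \<Rightarrow> 'g set \<Rightarrow> 'a \<Rightarrow> 'a" where
  "dist_space s I = (GREATEST f. space_fun f \<and> (\<forall>i\<in>I. f \<le> s i))"

definition agent_proj :: "('g \<Rightarrow> 'a::complete_lattice \<Rightarrow> 'a) \<Rightarrow> 'g \<Rightarrow> 'a \<Rightarrow> 'a" where
  "agent_proj s i c = Sup {e. s i e \<le> c}"

definition join_proj :: "('g \<Rightarrow> 'a::complete_lattice \<Rightarrow> 'a) \<Rightarrow> 'g set \<Rightarrow> 'a \<Rightarrow> 'a" where
  "join_proj s I c = Sup {agent_proj s i c | i. i \<in> I}"

definition group_proj :: "('g \<Rightarrow> 'a::complete_lattice \<Rightarrow> 'a) \<Rightarrow> 'g set \<Rightarrow> 'a \<Rightarrow> 'a" where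
  "group_proj s I c = Sup {e. dist_space s I e \<le> c}"

end

theory Submission
  imports Defs
begin

lemma space_fun_mono:
  assumes "space_fun f" "a \<le> b" shows "f a \<le> f b"
proof -
  have "f b = sup (f a) (f b)" using assms unfolding space_fun_def
    by (metis sup.absorb2)
  thus ?thesis by (metis sup.cobounded1)
qed

lemma space_funI:
  assumes "\<And>D. directed D \<Longrightarrow> f (Sup D) = Sup (f ` D)" "f bot = bot"
    "\<And>c d. f (sup c d) = sup (f c) (f d)"
  shows "space_fun f" using assms unfolding space_fun_def by blast

lemma dist_space_eq:
  fixes s :: "'g \<Rightarrow> 'a::complete_lattice \<Rightarrow> 'a"
  shows   "dist_space s I = Sup {f. space_fun f \<and> (\<forall>i\<in>I. f \<le> s i)}"
  (is "_ = Sup ?F")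
proof -
  have sf: "space_fun (Sup ?F)"
  proof (rule space_funI)
    fix D :: "'a set" assume "directed D"
    have "(Sup ?F) (Sup D) = (SUP f\<in>?F. SUP d\<in>D. f d)"
      using \<open>directed D\<close> by (simp add: space_fun_def)
    also have "\<dots> = (SUP d\<in>D. SUP f\<in>?F. f d)" by (rule SUP_commute)
    also have "\<dots> = Sup ((Sup ?F) ` D)" by simp
    finally show "(Sup ?F) (Sup D) = Sup ((Sup ?F) ` D)" .
  next
    show "(Sup ?F) bot = bot" by (simp add: space_fun_def)
  next
    fix c d :: 'a
    have "(Sup ?F) (sup c d) = (SUP f\<in>?F. sup (f c) (f d))"
      by (simp add: space_fun_def)
    also have "\<dots> = sup ((Sup ?F) c) ((Sup ?F) d)" unfolding Sup_apply by (rule Complete_Lattices.SUP_sup_distrib[symmetric])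
    finally show "(Sup ?F) (sup c d) = sup ((Sup ?F) c) ((Sup ?F) d)" .
  qed
  have le: "\<forall>i\<in>I. Sup ?F \<le> s i" by (intro ballI Sup_least) blast
  show ?thesis unfolding dist_space_def
    proof (rule Greatest_equality)
    show "space_fun (Sup ?F) \<and> (\<forall>i\<in>I. Sup ?F \<le> s i)" using sf le by blast
  next
    fix y assume "space_fun y \<and> (\<forall>i\<in>I. y \<le> s i)"
    thus "y \<le> Sup ?F" by (intro Sup_upper) blast
  qed
qed

lemma dist_space_prop:
  fixes s :: "'g \<Rightarrow> 'a::complete_lattice \<Rightarrow> 'a"
  shows   "space_fun (dist_space s I) \<and> (\<forall>i\<in>I. dist_space s I \<le> s i)"
proof -
  let ?F = "{f. space_fun f \<and> (\<forall>i\<in>I. f \<le> s i)}"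
  have "Greatest (\<lambda>f. space_fun f \<and> (\<forall>i\<in>I. f \<le> s i)) = Sup ?F"
    using dist_space_eq[of s I] unfolding dist_space_def by simp
  have sf: "space_fun (Sup ?F)"
  proof (rule space_funI)
    fix D :: "'a set" assume "directed D"
    have "(Sup ?F) (Sup D) = (SUP f\<in>?F. SUP d\<in>D. f d)"
      using \<open>directed D\<close> by (simp add: space_fun_def)
    also have "\<dots> = (SUP d\<in>D. SUP f\<in>?F. f d)" by (rule SUP_commute)
    also have "\<dots> = Sup ((Sup ?F) ` D)" by simp
    finally show "(Sup ?F) (Sup D) = Sup ((Sup ?F) ` D)" .
  next
    show "(Sup ?F) bot = bot" by (simp add: space_fun_def)
  next
    fix c d :: 'a
    have "(Sup ?F) (sup c d) = (SUP f\<in>?F. sup (f c) (f d))"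
      by (simp add: space_fun_def)
    also have "\<dots> = sup ((Sup ?F) c) ((Sup ?F) d)" unfolding Sup_apply by (rule Complete_Lattices.SUP_sup_distrib[symmetric])
    finally show "(Sup ?F) (sup c d) = sup ((Sup ?F) c) ((Sup ?F) d)" .
  qed
  have le: "\<forall>i\<in>I. Sup ?F \<le> s i" by (intro ballI Sup_least) blast
  show ?thesis using sf le dist_space_eq[of s I] by simp
qed

lemma dist_space_greatest:
  "space_fun f \<Longrightarrow> \<forall>i\<in>I. f \<le> s i \<Longrightarrow> f \<le> dist_space s I"
  unfolding dist_space_eq by (intro Sup_upper) blast

theorem mainTheorem3:
  fixes s :: "'g \<Rightarrow> 'a::complete_lattice \<Rightarrow> 'a"
    and c e :: 'a and I J :: "'g set"
  assumes "spatial_cs s"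
  shows "(dist_space s I e \<le> c \<longleftrightarrow> e \<le> group_proj s I c)
         \<and> (J \<subseteq> I \<longrightarrow> group_proj s J c \<le> group_proj s I c)
         \<and> join_proj s I c \<le> group_proj s I c"
proof (intro conjI impI)
  let ?D = "dist_space s I"
  have sfD: "space_fun ?D" and leD: "\<forall>i\<in>I. ?D \<le> s i" using dist_space_prop[of s I] by blast+
  let ?X = "{e. ?D e \<le> c}"
  have dir: "directed ?X" unfolding directed_def
  proof (intro conjI ballI)
    have "?D bot = bot" using sfD by (simp add: space_fun_def)
    hence "bot \<in> ?X" by simp
    thus "?X \<noteq> {}" by blast
    fix a b assume ab: "a \<in> ?X" "b \<in> ?X"
    have "?D (sup a b) = sup (?D a) (?D b)" using sfD by (simp add: space_fun_def)
    also have "\<dots> \<le> c" using ab by simp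
    finally have "sup a b \<in> ?X" by simp
    thus "\<exists>x\<in>?X. a \<le> x \<and> b \<le> x" by (intro bexI[of _ "sup a b"]) auto
  qed
  have DX: "?D (Sup ?X) \<le> c"
  proof -
    have "?D (Sup ?X) = Sup (?D ` ?X)" using sfD dir by (simp add: space_fun_def)
    also have "\<dots> \<le> c" by (rule SUP_least) simp
    finally show ?thesis .
  qed
  show "(?D e \<le> c) = (e \<le> group_proj s I c)"
  proof
    assume "?D e \<le> c" thus "e \<le> group_proj s I c"
      unfolding group_proj_def by (auto intro: Sup_upper)
  next
    assume "e \<le> group_proj s I c"
    hence "?D e \<le> ?D (Sup ?X)" using space_fun_mono[OF sfD] unfolding group_proj_def by blast
    thus "?D e \<le> c" using DX by (rule order_trans)
  qed
next
  assume "J \<subseteq> I"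
  have "dist_space s I \<le> dist_space s J"
  proof (rule dist_space_greatest)
    show "space_fun (dist_space s I)" using dist_space_prop[of s I] by blast
    show "\<forall>i\<in>J. dist_space s I \<le> s i" using dist_space_prop[of s I] \<open>J \<subseteq> I\<close> by blast
  qed
  have "{e. dist_space s J e \<le> c} \<subseteq> {e. dist_space s I e \<le> c}"
  proof
    fix x assume "x \<in> {e. dist_space s J e \<le> c}"
    moreover have "dist_space s I x \<le> dist_space s J x" using \<open>dist_space s I \<le> dist_space s J\<close> by (rule le_funD)
    ultimately show "x \<in> {e. dist_space s I e \<le> c}" by simp
  qed
  thus "group_proj s J c \<le> group_proj s I c" unfolding group_proj_def by (rule Sup_subset_mono)
next
  have leD: "\<forall>i\<in>I. dist_space s I \<le> s i" using dist_space_prop[of s I] by blast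
  show "join_proj s I c \<le> group_proj s I c"
    unfolding join_proj_def
  proof (rule Sup_least, clarify)
    fix i assume "i \<in> I"
    have "{e. s i e \<le> c} \<subseteq> {e. dist_space s I e \<le> c}"
    proof
      fix x assume "x \<in> {e. s i e \<le> c}"
      moreover have "dist_space s I x \<le> s i x" using leD \<open>i \<in> I\<close> by (simp add: le_fun_def)
      ultimately show "x \<in> {e. dist_space s I e \<le> c}" by simp
    qed
    thus "agent_proj s i c \<le> group_proj s I c"
      unfolding agent_proj_def group_proj_def by (rule Sup_subset_mono)
  qed
qed

end
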